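(* Let $n\ge 1$ and let $\mathcal{L}$ be a fully dissipative $n$-qubit Lindbladian all of whose jump operators are $n$-qubit Pauli operators, i.e. $$\mathcal{L}(\rho)=\sum_{j}\gamma_j\Big(P_j\rho P_j^{\dagger}-\tfrac12\{P_j^{\dagger}P_j,\rho\}\Big)=\sum_j\gamma_j\big(P_j\rho P_j-\rho\big),$$ where each $P_j$ is a tensor product of single-qubit operators from $\{I,X,Y,Z\}$ and $\gamma_j\ge 0$. Then $\mathcal{L}$ is quantum programmable.
   Context: A Lindbladian on a finite-dimensional Hilbert space $\mathcal{H}_S$ is a superoperator of GKSL form $\mathcal{L}(\rho)=-i[H,\rho]+\sum_j\gamma_j(L_j\rho L_j^\dagger-\frac12\{L_j^\dagger L_j,\rho\})$ with $H$ Hermitian and $\gamma_j\ge 0$; "fully dissipative" means $H=0$. It generates the quantum dynamical semigroup $(e^{t\mathcal{L}})_{t\ge0}$ of CPTP maps. Given a class $\Omega$ of linear maps from operators on $\mathcal{H}_S\otimes\mathcal{H}_P$ to operators on $\mathcal{H}_S$ (with $\mathcal{H}_P$ a finite-dimensional program space), $\mathcal{L}$ is (exactly) $\Omega$-programmable if there exist a map $\mathcal{P}\in\Omega$ and a continuous one-parameter family of density operators $(\pi_t)_{t\ge0}$ on $\mathcal{H}_P$ such that $\mathcal{P}(\rho\otimes\pi_t)=e^{t\mathcal{L}}(\rho)$ for all $t\ge0$ and all $\rho$ (equivalently, the maps $\mathcal{P}(\cdot\otimes\pi_t)$ and $e^{t\mathcal{L}}$ coincide). $\mathcal{L}$ is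 quantum programmable if this holds with $\Omega$ the set of completely positive trace-preserving (CPTP) maps. *)

theory Defs
  imports Complex_Main "Jordan_Normal_Form.Matrix"
begin

definition adj :: "complex mat \<Rightarrow> complex mat" where
  "adj A = mat (dim_col A) (dim_row A) (\<lambda>(i,j). cnj (A $$ (j,i)))"

definition tr :: "complex mat \<Rightarrow> complex" where
  "tr A = (\<Sum>i<dim_row A. A $$ (i,i))"

definition psd :: "nat \<Rightarrow> complex mat \<Rightarrow> bool" where
  "psd d A \<longleftrightarrow> A \<in> carrier_mat d d \<and>
     (\<forall>v :: nat \<Rightarrow> complex.
        (\<Sum>i<d. \<Sum>j<d. cnj (v i) * A $$ (i,j) * v j) \<in> \<real> \<and>
        Re (\<Sum>i<d. \<Sum>j<d. cnj (v i) * A $$ (i,j) * v j) \<ge> 0)"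

definition density :: "nat \<Rightarrow> complex mat \<Rightarrow> bool" where
  "density d A \<longleftrightarrow> psd d A \<and> tr A = 1"

(* Kronecker (tensor) product; index of (x,r) in A \<otimes> B is x * dim B + r *)
definition kron :: "complex mat \<Rightarrow> complex mat \<Rightarrow> complex mat" where
  "kron A B = mat (dim_row A * dim_row B) (dim_col A * dim_col B)
     (\<lambda>(i,j). A $$ (i div dim_row B, j div dim_col B) * B $$ (i mod dim_row B, j mod dim_col B))"

(* single-qubit Paulis: 0 = I, 1 = X, 2 = Y, 3 = Z *)
definition pauli1 :: "nat \<Rightarrow> complex mat" where
  "pauli1 a = mat 2 2 (\<lambda>(i,j).
     if a = 1 then (if i \<noteq> j then 1 else 0)
     else if a = 2 then (if i = 0 \<and> j = 1 then - \<i> else if i = 1 \<and> j = 0 then \<i> else 0)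
     else if a = 3 then (if i = j then (if i = 0 then 1 else -1) else 0)
     else (if i = j then 1 else 0))"

definition pauli_string :: "nat list \<Rightarrow> complex mat" where
  "pauli_string xs = foldr (\<lambda>a M. kron (pauli1 a) M) xs (1\<^sub>m 1)"

definition is_pauli :: "nat \<Rightarrow> complex mat \<Rightarrow> bool" where
  "is_pauli n P \<longleftrightarrow> (\<exists>xs. length xs = n \<and> set xs \<subseteq> {0..<4} \<and> P = pauli_string xs)"

definition lindblad :: "nat \<Rightarrow> (real \<times> complex mat) list \<Rightarrow> complex mat \<Rightarrow> complex mat" where
  "lindblad d jumps \<rho> = mat d d (\<lambda>(i,j).
     (\<Sum>(g,L)\<leftarrow>jumps. complex_of_real g *
        (L * \<rho> * adj L - (1/2) \<cdot>\<^sub>m (adj L * L * \<rho> + \<rho> * (adj L * L))) $$ (i,j)))"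

definition exp_super :: "nat \<Rightarrow> (complex mat \<Rightarrow> complex mat) \<Rightarrow> real \<Rightarrow> complex mat \<Rightarrow> complex mat" where
  "exp_super d L t \<rho> = mat d d (\<lambda>(i,j).
     (\<Sum>k. (complex_of_real t ^ k / of_nat (fact k)) * ((L ^^ k) \<rho>) $$ (i,j)))"

(* Phi \<otimes> id_k acting on (a*k) x (a*k) matrices (ancilla is the second tensor factor) *)
definition ext_id :: "nat \<Rightarrow> nat \<Rightarrow> nat \<Rightarrow> (complex mat \<Rightarrow> complex mat) \<Rightarrow> complex mat \<Rightarrow> complex mat" where
  "ext_id a b k \<Phi> M = mat (b*k) (b*k) (\<lambda>(i,j).
     \<Phi> (mat a a (\<lambda>(x,y). M $$ (x*k + i mod k, y*k + j mod k))) $$ (i div k, j div k))"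

definition cptp :: "nat \<Rightarrow> nat \<Rightarrow> (complex mat \<Rightarrow> complex mat) \<Rightarrow> bool" where
  "cptp a b \<Phi> \<longleftrightarrow>
     (\<forall>A \<in> carrier_mat a a. \<Phi> A \<in> carrier_mat b b) \<and>
     (\<forall>A \<in> carrier_mat a a. \<forall>B \<in> carrier_mat a a. \<Phi> (A + B) = \<Phi> A + \<Phi> B) \<and>
     (\<forall>c. \<forall>A \<in> carrier_mat a a. \<Phi> (c \<cdot>\<^sub>m A) = c \<cdot>\<^sub>m \<Phi> A) \<and>
     (\<forall>A \<in> carrier_mat a a. tr (\<Phi> A) = tr A) \<and>
     (\<forall>k M. psd (a*k) M \<longrightarrow> psd (b*k) (ext_id a b k \<Phi> M))"

definition quantum_programmable :: "nat \<Rightarrow> (complex mat \<Rightarrow> complex mat) \<Rightarrow> bool" where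
  "quantum_programmable d L \<longleftrightarrow>
     (\<exists>(m::nat) \<Phi> (\<pi> :: real \<Rightarrow> complex mat).
        cptp (d*m) d \<Phi> \<and>
        (\<forall>t\<ge>0. density m (\<pi> t)) \<and>
        (\<forall>i<m. \<forall>j<m. continuous_on {0..} (\<lambda>t. \<pi> t $$ (i,j))) \<and>
        (\<forall>t\<ge>0. \<forall>\<rho> \<in> carrier_mat d d. \<Phi> (kron \<rho> (\<pi> t)) = exp_super d L t \<rho>))"

end

theory Submission
  imports Defs
begin


lemma mult_entry:
  assumes "A \<in> carrier_mat r c" "B \<in> carrier_mat c s" "i < r" "j < s"
  shows "(A * B) $$ (i,j) = (\<Sum>l<c. A $$ (i,l) * B $$ (l,j))"
  using assms by (auto simp: index_mult_mat scalar_prod_def atLeast0LessThan intro!: sum.cong)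

lemma sum_split_mult:
  "(\<Sum>l<p*r. f l) = (\<Sum>x<p. \<Sum>y<r. f (x*r+y :: nat))"
proof (induction p)
  case 0 then show ?case by simp
next
  case (Suc p)
  have "(\<Sum>l<Suc p*r. f l) = (\<Sum>l\<in>{0..<p*r}. f l) + (\<Sum>l\<in>{p*r..<p*r+r}. f l)"
    by (subst sum.atLeastLessThan_concat) (auto simp: atLeast0LessThan add.commute)
  also have "(\<Sum>l\<in>{p*r..<p*r+r}. f l) = (\<Sum>y<r. f (p*r+y))"
    using sum.shift_bounds_nat_ivl[of f 0 "p*r" r] by (simp add: atLeast0LessThan add.commute)
  finally show ?case using Suc by (simp add: atLeast0LessThan)
qed

lemma kron_dims[simp]:
  "dim_row (kron A B) = dim_row A * dim_row B"
  "dim_col (kron A B) = dim_col A * dim_col B"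
  unfolding kron_def by simp_all
lemma kron_carrier:
  "A \<in> carrier_mat a1 a2 \<Longrightarrow> B \<in> carrier_mat b1 b2 \<Longrightarrow> kron A B \<in> carrier_mat (a1*b1) (a2*b2)"
  unfolding carrier_mat_def by simp
lemma kron_index:
  "i < dim_row A * dim_row B \<Longrightarrow> j < dim_col A * dim_col B \<Longrightarrow>
   kron A B $$ (i,j) = A $$ (i div dim_row B, j div dim_col B) * B $$ (i mod dim_row B, j mod dim_col B)"
  unfolding kron_def by simp
lemma div_less_mult: "i < a * (b::nat) \<Longrightarrow> i div b < a"
  by (simp add: less_mult_imp_div_less)
lemma mod_less_mult: "i < a * (b::nat) \<Longrightarrow> i mod b < b"
  by (cases "b = 0") auto

lemma kron_mult:
  assumes A: "A \<in> carrier_mat a1 a2" and B: "B \<in> carrier_mat b1 b2"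
    and C: "C \<in> carrier_mat a2 a3" and D: "D \<in> carrier_mat b2 b3"
  shows "kron A B * kron C D = kron (A*C) (B*D)"
proof -
  have dA: "dim_row A = a1" "dim_col A = a2" using A by (simp_all add: carrier_matD)
  have dB: "dim_row B = b1" "dim_col B = b2" using B by (simp_all add: carrier_matD)
  have dC: "dim_row C = a2" "dim_col C = a3" using C by (simp_all add: carrier_matD)
  have dD: "dim_row D = b2" "dim_col D = b3" using D by (simp_all add: carrier_matD)
  show ?thesis
  proof (rule eq_matI)
    fix i j assume i: "i < dim_row (kron (A*C) (B*D))" and j: "j < dim_col (kron (A*C) (B*D))"
    then have i': "i < a1*b1" and j': "j < a3*b3" by (simp_all add: dA dB dC dD)
    have "(kron A B * kron C D) $$ (i,j) = (\<Sum>l<a2*b2. kron A B $$ (i,l) * kron C D $$ (l,j))"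
      by (rule mult_entry[OF kron_carrier[OF A B] kron_carrier[OF C D] i' j'])
    also have "\<dots> = (\<Sum>x<a2. \<Sum>y<b2. kron A B $$ (i,x*b2+y) * kron C D $$ (x*b2+y,j))"
      by (rule sum_split_mult)
    also have "\<dots> = (\<Sum>x<a2. \<Sum>y<b2. (A $$ (i div b1, x) * C $$ (x, j div b3)) * (B $$ (i mod b1, y) * D $$ (y, j mod b3)))"
    proof (intro sum.cong refl)
      fix x y assume x: "x \<in> {..<a2}" and y: "y \<in> {..<b2}"
      have l: "x*b2+y < a2*b2"
      proof -
        have "x*b2+y < (x+1)*b2" using y by simp
        also have "\<dots> \<le> a2*b2" using x by (intro mult_le_mono1) simp
        finally show ?thesis .
      qed
      have yb: "y < b2" using y by simp
      have "kron A B $$ (i,x*b2+y) = A $$ (i div b1, x) * B $$ (i mod b1, y)"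
        using kron_index[of i A B "x*b2+y"] i' l yb by (simp add: dA dB)
      moreover have "kron C D $$ (x*b2+y,j) = C $$ (x, j div b3) * D $$ (y, j mod b3)"
        using kron_index[of "x*b2+y" C D j] j' l yb by (simp add: dC dD)
      ultimately show "kron A B $$ (i,x*b2+y) * kron C D $$ (x*b2+y,j) = (A $$ (i div b1, x) * C $$ (x, j div b3)) * (B $$ (i mod b1, y) * D $$ (y, j mod b3))"
        by (simp add: algebra_simps)
    qed
    also have "\<dots> = (\<Sum>x<a2. A $$ (i div b1, x) * C $$ (x, j div b3)) * (\<Sum>y<b2. B $$ (i mod b1, y) * D $$ (y, j mod b3))"
      by (simp add: sum_product)
    also have "\<dots> = (A*C) $$ (i div b1, j div b3) * (B*D) $$ (i mod b1, j mod b3)"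
    proof -
      have "(A*C) $$ (i div b1, j div b3) = (\<Sum>x<a2. A $$ (i div b1, x) * C $$ (x, j div b3))"
        by (rule mult_entry[OF A C div_less_mult[OF i'] div_less_mult[OF j']])
      moreover have "(B*D) $$ (i mod b1, j mod b3) = (\<Sum>y<b2. B $$ (i mod b1, y) * D $$ (y, j mod b3))"
        by (rule mult_entry[OF B D mod_less_mult[OF i'] mod_less_mult[OF j']])
      ultimately show ?thesis by simp
    qed
    also have "\<dots> = kron (A*C) (B*D) $$ (i,j)"
      using kron_index[of i "A*C" "B*D" j] i' j' by (simp add: dA dB dC dD)
    finally show "(kron A B * kron C D) $$ (i,j) = kron (A*C) (B*D) $$ (i,j)" .
  qed (simp_all add: dA dB dC dD)
qed

lemma mat2_eq:
  assumes "A \<in> carrier_mat 2 2" "B \<in> carrier_mat 2 2"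
    "A $$ (0,0) = B $$ (0,0)" "A $$ (0,1) = B $$ (0,1)" "A $$ (1,0) = B $$ (1,0)" "A $$ (1,1) = B $$ (1,1)"
  shows "A = B"
proof (rule eq_matI)
  fix i j assume "i < dim_row B" "j < dim_col B"
  then have "i < 2" "j < 2" using assms(2) by (simp_all add: carrier_matD)
  then have "i = 0 \<or> i = 1" "j = 0 \<or> j = 1" by auto
  then show "A $$ (i,j) = B $$ (i,j)" using assms(3-6) by auto
qed (use assms(1,2) in \<open>simp_all add: carrier_matD\<close>)

lemma prod2:
  assumes "A \<in> carrier_mat 2 2" "B \<in> carrier_mat 2 2" "i < 2" "j < 2"
  shows "(A * B) $$ (i,j) = A $$ (i,0) * B $$ (0,j) + A $$ (i,1) * B $$ (1,j)"
proof -
  have "(A * B) $$ (i,j) = row A i \<bullet> col B j" using assms by (simp add: carrier_matD)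
  also have "\<dots> = (\<Sum>l<2. A $$ (i,l) * B $$ (l,j))"
    using assms by (simp add: scalar_prod_def carrier_matD atLeast0LessThan)
  also have "\<dots> = A $$ (i,0) * B $$ (0,j) + A $$ (i,1) * B $$ (1,j)"
    by (simp add: numeral_2_eq_2)
  finally show ?thesis .
qed

lemma pauli1_carrier[simp]: "pauli1 a \<in> carrier_mat 2 2"
  unfolding pauli1_def by simp

lemma pauli1_dims[simp]: "dim_row (pauli1 a) = 2" "dim_col (pauli1 a) = 2"
  unfolding pauli1_def by simp_all

lemma pauli1_idx:
  "i < 2 \<Longrightarrow> j < 2 \<Longrightarrow> pauli1 a $$ (i,j) =
     (if a = 1 then (if i \<noteq> j then 1 else 0)
     else if a = 2 then (if i = 0 \<and> j = 1 then - \<i> else if i = 1 \<and> j = 0 then \<i> else 0)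
     else if a = 3 then (if i = j then (if i = 0 then 1 else -1) else 0)
     else (if i = j then 1 else 0))"
  unfolding pauli1_def by simp

definition ptab_e :: "nat \<Rightarrow> nat \<Rightarrow> nat" where
  "ptab_e a b = (if a = 0 then b else if b = 0 then a else if a = b then 0 else 6 - a - b)"
definition ptab_c :: "nat \<Rightarrow> nat \<Rightarrow> complex" where
  "ptab_c a b = (if a = 0 \<or> b = 0 \<or> a = b then 1
     else if (a = 1 \<and> b = 2) \<or> (a = 2 \<and> b = 3) \<or> (a = 3 \<and> b = 1) then \<i> else - \<i>)"

lemma pauli1_prod:
  assumes "a < 4" "b < 4"
  shows "pauli1 a * pauli1 b = ptab_c a b \<cdot>\<^sub>m pauli1 (ptab_e a b)"
proof -
  have "a = 0 \<or> a = 1 \<or> a = 2 \<or> a = 3" "b = 0 \<or> b = 1 \<or> b = 2 \<or> b = 3" using assms by auto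
  then show ?thesis
    by (elim disjE; intro mat2_eq; simp add: prod2 pauli1_idx ptab_e_def ptab_c_def mult_carrier_mat[OF pauli1_carrier pauli1_carrier] del: index_mult_mat)
qed

lemma ptab_props: "a < 4 \<Longrightarrow> b < 4 \<Longrightarrow> ptab_e a b < 4 \<and> ptab_c a b * cnj (ptab_c a b) = 1"
  unfolding ptab_e_def ptab_c_def by auto

lemma adj_dims[simp]: "dim_row (adj A) = dim_col A" "dim_col (adj A) = dim_row A"
  unfolding adj_def by simp_all

lemma adj_index: "i < dim_col A \<Longrightarrow> j < dim_row A \<Longrightarrow> adj A $$ (i,j) = cnj (A $$ (j,i))"
  unfolding adj_def by simp

lemma adj_adj: "adj (adj A) = A"
  by (rule eq_matI) (simp_all add: adj_index)

lemma adj_smult: "adj (c \<cdot>\<^sub>m A) = cnj c \<cdot>\<^sub>m adj A"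
  by (rule eq_matI) (simp_all add: adj_index)

lemma smult_smult_mat: "a \<cdot>\<^sub>m (b \<cdot>\<^sub>m A) = (a * b :: complex) \<cdot>\<^sub>m A"
  by (rule eq_matI) simp_all

lemma adj_mult:
  assumes A: "A \<in> carrier_mat r c" and B: "B \<in> carrier_mat c s"
  shows "adj (A * B) = adj B * adj A"
proof (rule eq_matI)
  have dA: "dim_row A = r" "dim_col A = c" using A by (simp_all add: carrier_matD)
  have dB: "dim_row B = c" "dim_col B = s" using B by (simp_all add: carrier_matD)
  have aB: "adj B \<in> carrier_mat s c" and aA: "adj A \<in> carrier_mat c r"
    by (rule carrier_matI, simp_all add: dA dB)+
  fix i j assume "i < dim_row (adj B * adj A)" "j < dim_col (adj B * adj A)"
  then have i: "i < s" and j: "j < r" by (simp_all add: dA dB)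
  have "adj (A*B) $$ (i,j) = cnj ((A*B) $$ (j,i))"
    by (rule adj_index) (simp_all add: i j dA dB)
  also have "\<dots> = cnj (\<Sum>l<c. A $$ (j,l) * B $$ (l,i))"
    by (simp only: mult_entry[OF A B j i])
  also have "\<dots> = (\<Sum>l<c. adj B $$ (i,l) * adj A $$ (l,j))"
    by (simp add: adj_index i j dA dB mult.commute)
  also have "\<dots> = (adj B * adj A) $$ (i,j)"
    by (simp only: mult_entry[OF aB aA i j])
  finally show "adj (A*B) $$ (i,j) = (adj B * adj A) $$ (i,j)" .
qed (simp_all add: carrier_matD[OF A] carrier_matD[OF B])
lemma adj_kron: "adj (kron A B) = kron (adj A) (adj B)"
proof (rule eq_matI)
  fix i j assume i: "i < dim_row (kron (adj A) (adj B))" and j: "j < dim_col (kron (adj A) (adj B))"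
  then have i': "i < dim_col A * dim_col B" and j': "j < dim_row A * dim_row B" by simp_all
  show "adj (kron A B) $$ (i,j) = kron (adj A) (adj B) $$ (i,j)"
    using i' j' by (simp add: adj_index kron_index div_less_mult mod_less_mult)
qed simp_all

lemma kron_smult_left: "kron (c \<cdot>\<^sub>m A) B = c \<cdot>\<^sub>m kron A B"
  by (rule eq_matI) (simp_all add: kron_index div_less_mult mod_less_mult)

lemma kron_smult_right: "kron A (c \<cdot>\<^sub>m B) = c \<cdot>\<^sub>m kron A B"
  by (rule eq_matI) (simp_all add: kron_index div_less_mult mod_less_mult)

lemma kron_one: "kron (1\<^sub>m a) (1\<^sub>m b) = 1\<^sub>m (a*b)"
proof (rule eq_matI)
  fix i j assume "i < dim_row (1\<^sub>m (a*b) :: complex mat)" "j < dim_col (1\<^sub>m (a*b) :: complex mat)"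
  then have i: "i < a*b" and j: "j < a*b" by simp_all
  have eq: "(i div b = j div b \<and> i mod b = j mod b) = (i = j)"
    by (metis div_mult_mod_eq)
  show "kron (1\<^sub>m a) (1\<^sub>m b) $$ (i,j) = 1\<^sub>m (a*b) $$ (i,j)"
    using i j apply (simp add: kron_index div_less_mult mod_less_mult) using eq by blast
qed simp_all

lemma pauli1_adj_carrier: "adj (pauli1 a) \<in> carrier_mat 2 2"
  by (rule carrier_matI) simp_all

lemma pauli1_adj: "adj (pauli1 a) = pauli1 a"
  by (intro mat2_eq pauli1_adj_carrier pauli1_carrier) (simp_all add: adj_index pauli1_idx)

lemma pauli1_zero: "pauli1 0 = 1\<^sub>m 2"
  by (intro mat2_eq) (simp_all add: pauli1_idx)

lemma ps_Cons: "pauli_string (a#xs) = kron (pauli1 a) (pauli_string xs)"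
  by (simp add: pauli_string_def)
lemma ps_Nil: "pauli_string [] = 1\<^sub>m 1"
  by (simp add: pauli_string_def)

lemma ps_carrier: "pauli_string xs \<in> carrier_mat (2^length xs) (2^length xs)"
proof (induction xs)
  case Nil then show ?case by (simp add: ps_Nil)
next
  case (Cons a xs)
  show ?case using kron_carrier[OF pauli1_carrier Cons.IH, of a] by (simp add: ps_Cons)
qed

lemma ps_adj: "adj (pauli_string xs) = pauli_string xs"
proof (induction xs)
  case Nil
  have "adj (1\<^sub>m 1 :: complex mat) = 1\<^sub>m 1" by (rule eq_matI) (simp_all add: adj_index)
  then show ?case by (simp add: ps_Nil)
next
  case (Cons a xs)
  then show ?case by (simp add: ps_Cons adj_kron pauli1_adj)
qed

lemma one_smult_mat': "(1::complex) \<cdot>\<^sub>m A = A"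
  by (rule eq_matI) simp_all

lemma ps_prod:
  assumes "length xs = length ys" "set xs \<subseteq> {0..<4}" "set ys \<subseteq> {0..<4}"
  shows "\<exists>c zs. c * cnj c = 1 \<and> length zs = length xs \<and> set zs \<subseteq> {0..<4} \<and>
           pauli_string xs * pauli_string ys = c \<cdot>\<^sub>m pauli_string zs"
  using assms
proof (induction xs arbitrary: ys)
  case Nil
  then show ?case by (intro exI[of _ 1] exI[of _ "[]"]) (simp add: ps_Nil one_smult_mat')
next
  case (Cons a xs)
  then obtain b ys' where ys: "ys = b # ys'" by (cases ys) auto
  have a: "a < 4" and b: "b < 4" using Cons.prems ys by auto
  have "length xs = length ys'" "set xs \<subseteq> {0..<4}" "set ys' \<subseteq> {0..<4}" using Cons.prems ys by auto
  from Cons.IH[OF this] obtain c zs where c: "c * cnj c = 1" and zs: "length zs = length xs" "set zs \<subseteq> {0..<4}"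
    and eq: "pauli_string xs * pauli_string ys' = c \<cdot>\<^sub>m pauli_string zs" by blast
  have l: "length ys' = length xs" using Cons.prems ys by simp
  have "pauli_string (a#xs) * pauli_string ys = kron (pauli1 a * pauli1 b) (pauli_string xs * pauli_string ys')"
  proof -
    have c': "pauli_string ys' \<in> carrier_mat (2^length xs) (2^length xs)" using ps_carrier[of ys'] l by simp
    show ?thesis unfolding ys ps_Cons
      by (rule kron_mult[OF pauli1_carrier ps_carrier pauli1_carrier c'])
  qed
  also have "\<dots> = (ptab_c a b * c) \<cdot>\<^sub>m pauli_string (ptab_e a b # zs)"
    by (simp add: pauli1_prod[OF a b] eq kron_smult_left kron_smult_right ps_Cons smult_smult_mat mult.commute)
  finally show ?case
    using ptab_props[OF a b] c zs
    by (intro exI[of _ "ptab_c a b * c"] exI[of _ "ptab_e a b # zs"]) (simp add: algebra_simps)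
qed

lemma sandwich_entry:
  fixes P X :: "complex mat"
  assumes P: "P \<in> carrier_mat d d" and X: "X \<in> carrier_mat d d" and a: "a < d" and b: "b < d"
  shows "(P * X * P) $$ (a,b) = (\<Sum>x<d. \<Sum>y<d. P $$ (a,x) * X $$ (x,y) * P $$ (y,b))"
proof -
  have PX: "P * X \<in> carrier_mat d d" using P X by (rule mult_carrier_mat)
  have "(P * X * P) $$ (a,b) = (\<Sum>y<d. (P * X) $$ (a,y) * P $$ (y,b))"
    by (rule mult_entry[OF PX P a b])
  also have "\<dots> = (\<Sum>y<d. (\<Sum>x<d. P $$ (a,x) * X $$ (x,y)) * P $$ (y,b))"
    by (intro sum.cong refl) (simp only: mult_entry[OF P X a] lessThan_iff)
  also have "\<dots> = (\<Sum>y<d. \<Sum>x<d. P $$ (a,x) * X $$ (x,y) * P $$ (y,b))"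
    by (simp add: sum_distrib_right)
  also have "\<dots> = (\<Sum>x<d. \<Sum>y<d. P $$ (a,x) * X $$ (x,y) * P $$ (y,b))"
    by (rule sum.swap)
  finally show ?thesis .
qed

lemma sandwich_lin:
  fixes P X :: "complex mat" and Y :: "'b \<Rightarrow> complex mat"
  assumes P: "P \<in> carrier_mat d d" and X: "X \<in> carrier_mat d d" and a: "a < d" and b: "b < d"
    and Y: "\<And>q. q \<in> S \<Longrightarrow> Y q \<in> carrier_mat d d"
    and XY: "\<And>x y. x < d \<Longrightarrow> y < d \<Longrightarrow> X $$ (x,y) = (\<Sum>q\<in>S. \<alpha> q * Y q $$ (x,y))"
  shows "(P * X * P) $$ (a,b) = (\<Sum>q\<in>S. \<alpha> q * (P * Y q * P) $$ (a,b))"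
proof -
  have "(P * X * P) $$ (a,b) = (\<Sum>x<d. \<Sum>y<d. P $$ (a,x) * X $$ (x,y) * P $$ (y,b))"
    by (rule sandwich_entry[OF P X a b])
  also have "\<dots> = (\<Sum>x<d. \<Sum>y<d. \<Sum>q\<in>S. \<alpha> q * (P $$ (a,x) * Y q $$ (x,y) * P $$ (y,b)))"
    by (intro sum.cong refl) (simp add: XY sum_distrib_left sum_distrib_right mult_ac)
  also have "\<dots> = (\<Sum>q\<in>S. \<alpha> q * (\<Sum>x<d. \<Sum>y<d. P $$ (a,x) * Y q $$ (x,y) * P $$ (y,b)))"
    by (simp add: sum_distrib_left sum.swap[of _ S])
  also have "\<dots> = (\<Sum>q\<in>S. \<alpha> q * (P * Y q * P) $$ (a,b))"
    by (intro sum.cong refl) (simp add: sandwich_entry[OF P Y a b])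
  finally show ?thesis .
qed

lemma regroup:
  fixes f :: "nat \<Rightarrow> 'a::comm_ring_1"
  assumes "\<And>q. q < m \<Longrightarrow> g q < m"
  shows "(\<Sum>q<m. f q * A (g q)) = (\<Sum>q<m. (\<Sum>q'\<in>{q'\<in>{..<m}. g q' = q}. f q') * A q)"
proof -
  have "(\<Sum>q<m. (\<Sum>q'\<in>{q'\<in>{..<m}. g q' = q}. f q') * A q) = (\<Sum>q<m. (\<Sum>q'\<in>{q'\<in>{..<m}. g q' = q}. f q' * A (g q')))"
    by (intro sum.cong refl) (simp add: sum_distrib_right)
  also have "\<dots> = (\<Sum>q<m. f q * A (g q))"
    by (rule sum.group) (use assms in auto)
  finally show ?thesis by simp
qed

definition Top :: "nat \<Rightarrow> (nat \<Rightarrow> real) \<Rightarrow> nat \<Rightarrow> (nat \<Rightarrow> nat \<Rightarrow> nat) \<Rightarrow> (nat \<Rightarrow> real) \<Rightarrow> nat \<Rightarrow> real" where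
  "Top J gam m mu f q = (\<Sum>i<J. gam i * (\<Sum>q'\<in>{q'\<in>{..<m}. mu i q' = q}. f q'))"

definition coefE where
  "coefE J gam m mu \<delta> G k = ((\<lambda>f q. Top J gam m mu f q - G * f q) ^^ k) \<delta>"

lemma coefE_Suc: "coefE J gam m mu \<delta> G (Suc k) = (\<lambda>q. Top J gam m mu (coefE J gam m mu \<delta> G k) q - G * coefE J gam m mu \<delta> G k q)"
  unfolding coefE_def by simp

lemma expansion:
  fixes L :: "complex mat \<Rightarrow> complex mat" and Pm Qf :: "nat \<Rightarrow> complex mat"
  assumes Lc: "\<And>X. X \<in> carrier_mat d d \<Longrightarrow> L X \<in> carrier_mat d d"
    and Le: "\<And>X a b. X \<in> carrier_mat d d \<Longrightarrow> a < d \<Longrightarrow> b < d \<Longrightarrow>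
      L X $$ (a,b) = (\<Sum>i<J. of_real (gam i) * ((Pm i * X * Pm i) $$ (a,b) - X $$ (a,b)))"
    and Pc: "\<And>i. i < J \<Longrightarrow> Pm i \<in> carrier_mat d d"
    and Qc: "\<And>q. q < m \<Longrightarrow> Qf q \<in> carrier_mat d d"
    and rho: "\<rho> \<in> carrier_mat d d"
    and mu: "\<And>i q. i < J \<Longrightarrow> q < m \<Longrightarrow> mu i q < m \<and> Pm i * (Qf q * \<rho> * Qf q) * Pm i = Qf (mu i q) * \<rho> * Qf (mu i q)"
    and q0: "q0 < m" "Qf q0 * \<rho> * Qf q0 = \<rho>"
    and G: "G = (\<Sum>i<J. gam i)"
  shows "(L^^k) \<rho> \<in> carrier_mat d d \<and> (\<forall>a<d. \<forall>b<d. (L^^k) \<rho> $$ (a,b) =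
     (\<Sum>q<m. of_real (coefE J gam m mu (\<lambda>q. if q = q0 then 1 else 0) G k q) * (Qf q * \<rho> * Qf q) $$ (a,b)))"
proof (induction k)
  case 0
  have "\<rho> $$ (a,b) = (\<Sum>q<m. of_real (if q = q0 then 1 else 0) * (Qf q * \<rho> * Qf q) $$ (a,b))" for a b
  proof -
    have "(\<Sum>q<m. of_real (if q = q0 then 1 else 0) * (Qf q * \<rho> * Qf q) $$ (a,b)) = (Qf q0 * \<rho> * Qf q0) $$ (a,b)"
      using q0(1) by (simp add: if_distrib if_distribR sum.delta' cong: if_cong)
    then show ?thesis using q0(2) by simp
  qed
  then show ?case using rho by (simp add: coefE_def)
next
  case (Suc k)
  define X where "X = (L^^k) \<rho>"
  define e where "e = coefE J gam m mu (\<lambda>q. if q = q0 then 1 else 0) G k"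
  define Ad where "Ad q = Qf q * \<rho> * Qf q" for q
  have X: "X \<in> carrier_mat d d" and XY: "\<And>a b. a < d \<Longrightarrow> b < d \<Longrightarrow> X $$ (a,b) = (\<Sum>q<m. of_real (e q) * Ad q $$ (a,b))"
    using Suc.IH by (auto simp: X_def e_def Ad_def)
  have Adc: "Ad q \<in> carrier_mat d d" if "q < m" for q
    unfolding Ad_def using Qc[OF that] rho by (intro mult_carrier_mat) 
  have "(L^^Suc k) \<rho> = L X" by (simp add: X_def)
  moreover have "L X \<in> carrier_mat d d" by (rule Lc[OF X])
  moreover have "L X $$ (a,b) = (\<Sum>q<m. of_real (coefE J gam m mu (\<lambda>q. if q = q0 then 1 else 0) G (Suc k) q) * Ad q $$ (a,b))"
    if a: "a < d" and b: "b < d" for a b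
  proof -
    have step: "(Pm i * X * Pm i) $$ (a,b) = (\<Sum>q<m. of_real (e q) * Ad (mu i q) $$ (a,b))" if i: "i < J" for i
    proof -
      have "(Pm i * X * Pm i) $$ (a,b) = (\<Sum>q\<in>{..<m}. of_real (e q) * (Pm i * Ad q * Pm i) $$ (a,b))"
        by (rule sandwich_lin[OF Pc[OF i] X a b]) (auto intro: Adc XY)
      also have "\<dots> = (\<Sum>q<m. of_real (e q) * Ad (mu i q) $$ (a,b))"
        by (intro sum.cong refl) (simp add: Ad_def mu[OF i])
      finally show ?thesis .
    qed
    have "L X $$ (a,b) = (\<Sum>i<J. of_real (gam i) * ((\<Sum>q<m. of_real (e q) * Ad (mu i q) $$ (a,b)) - (\<Sum>q<m. of_real (e q) * Ad q $$ (a,b))))"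
      using Le[OF X a b] step XY[OF a b] by simp
    also have "\<dots> = (\<Sum>i<J. of_real (gam i) * (\<Sum>q<m. of_real (e q) * Ad (mu i q) $$ (a,b))) - of_real G * (\<Sum>q<m. of_real (e q) * Ad q $$ (a,b))"
      by (simp add: G right_diff_distrib sum_subtractf sum_distrib_right)
    also have "(\<Sum>i<J. of_real (gam i) * (\<Sum>q<m. of_real (e q) * Ad (mu i q) $$ (a,b))) =
        (\<Sum>i<J. of_real (gam i) * (\<Sum>q<m. (\<Sum>q'\<in>{q'\<in>{..<m}. mu i q' = q}. of_real (e q')) * Ad q $$ (a,b)))"
    proof (intro sum.cong refl)
      fix i assume "i \<in> {..<J}"
      then have "\<And>q. q < m \<Longrightarrow> mu i q < m" using mu by auto
      then show "of_real (gam i) * (\<Sum>q<m. of_real (e q) * Ad (mu i q) $$ (a,b)) =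
        of_real (gam i) * (\<Sum>q<m. (\<Sum>q'\<in>{q'\<in>{..<m}. mu i q' = q}. of_real (e q')) * Ad q $$ (a,b))"
        using regroup[of m "mu i" "\<lambda>q. of_real (e q) :: complex" "\<lambda>q. Ad q $$ (a,b)"] by simp
    qed
    also have "\<dots> = (\<Sum>q<m. of_real (Top J gam m mu e q) * Ad q $$ (a,b))"
      by (simp add: Top_def sum_distrib_left sum_distrib_right sum.swap[of _ "{..<J}"] mult.assoc)
    finally have "L X $$ (a,b) = (\<Sum>q<m. of_real (Top J gam m mu e q) * Ad q $$ (a,b)) - of_real G * (\<Sum>q<m. of_real (e q) * Ad q $$ (a,b))" .
    also have "\<dots> = (\<Sum>q<m. of_real (Top J gam m mu e q - G * e q) * Ad q $$ (a,b))"
      by (simp add: sum_distrib_left sum_subtractf left_diff_distrib mult.assoc)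
    finally show ?thesis by (simp add: coefE_Suc e_def)
  qed
  ultimately show ?case by (simp add: Ad_def)
qed

lemma pascal_sum:
  fixes c :: "nat \<Rightarrow> real" and a :: real
  shows "(\<Sum>l\<le>k. real (k choose l) * a^(k-l) * c (Suc l)) + a * (\<Sum>l\<le>k. real (k choose l) * a^(k-l) * c l)
       = (\<Sum>l\<le>Suc k. real (Suc k choose l) * a^(Suc k - l) * c l)"
proof -
  have "(\<Sum>l\<le>Suc k. real (Suc k choose l) * a^(Suc k - l) * c l)
      = a^(Suc k) * c 0 + (\<Sum>l\<le>k. real (Suc k choose Suc l) * a^(k - l) * c (Suc l))"
    by (subst sum.atMost_Suc_shift) simp
  also have "(\<Sum>l\<le>k. real (Suc k choose Suc l) * a^(k - l) * c (Suc l))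
      = (\<Sum>l\<le>k. real (k choose l) * a^(k-l) * c (Suc l)) + (\<Sum>l\<le>k. real (k choose Suc l) * a^(k - l) * c (Suc l))"
    by (simp add: sum.distrib[symmetric] algebra_simps)
  also have "(\<Sum>l\<le>k. real (k choose Suc l) * a^(k - l) * c (Suc l)) = (\<Sum>l\<le>Suc k. real (k choose l) * a^(Suc k - l) * c l) - a^(Suc k) * c 0"
    by (subst sum.atMost_Suc_shift) simp
  also have "(\<Sum>l\<le>Suc k. real (k choose l) * a^(Suc k - l) * c l) = (\<Sum>l\<le>k. real (k choose l) * a^(Suc k - l) * c l)"
    by (subst sum.atMost_Suc) simp
  also have "(\<Sum>l\<le>k. real (k choose l) * a^(Suc k - l) * c l) = a * (\<Sum>l\<le>k. real (k choose l) * a^(k-l) * c l)"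
    by (simp add: sum_distrib_left Suc_diff_le mult_ac)
  finally show ?thesis by simp
qed

lemma Top_lin:
  assumes "finite S"
  shows "Top J gam m mu (\<lambda>q. \<Sum>x\<in>S. \<alpha> x * f x q) q = (\<Sum>x\<in>S. \<alpha> x * Top J gam m mu (f x) q)"
  unfolding Top_def
  by (simp add: sum_distrib_left sum.swap[of _ S] mult_ac)

lemma Top_sum:
  assumes "\<And>i q. i < J \<Longrightarrow> q < m \<Longrightarrow> mu i q < m"
  shows "(\<Sum>q<m. Top J gam m mu f q) = (\<Sum>i<J. gam i) * (\<Sum>q<m. f q)"
proof -
  have "(\<Sum>q<m. Top J gam m mu f q) = (\<Sum>i<J. gam i * (\<Sum>q<m. \<Sum>q'\<in>{q'\<in>{..<m}. mu i q' = q}. f q'))"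
    unfolding Top_def by (simp add: sum_distrib_left sum.swap[of _ "{..<m}"])
  also have "\<dots> = (\<Sum>i<J. gam i * (\<Sum>q<m. f q))"
  proof (intro sum.cong refl)
    fix i assume "i \<in> {..<J}"
    then show "gam i * (\<Sum>q<m. \<Sum>q'\<in>{q'\<in>{..<m}. mu i q' = q}. f q') = gam i * (\<Sum>q<m. f q)"
      using assms by (subst sum.group) auto
  qed
  finally show ?thesis by (simp add: sum_distrib_right)
qed

lemma Top_nonneg:
  assumes "\<And>i. i < J \<Longrightarrow> gam i \<ge> 0" "\<And>q. f q \<ge> 0"
  shows "Top J gam m mu f q \<ge> 0"
  unfolding Top_def using assms by (intro sum_nonneg mult_nonneg_nonneg) auto

lemma coefE_binom:
  "coefE J gam m mu \<delta> G k q = (\<Sum>l\<le>k. real (k choose l) * (-G)^(k-l) * ((Top J gam m mu ^^ l) \<delta>) q)"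
proof (induction k arbitrary: q)
  case 0 then show ?case by (simp add: coefE_def)
next
  case (Suc k)
  have eq: "coefE J gam m mu \<delta> G k = (\<lambda>q. \<Sum>l\<le>k. real (k choose l) * (-G)^(k-l) * ((Top J gam m mu ^^ l) \<delta>) q)"
    using Suc.IH by auto
  have "coefE J gam m mu \<delta> G (Suc k) q = (\<Sum>l\<le>k. real (k choose l) * (-G)^(k-l) * ((Top J gam m mu ^^ Suc l) \<delta>) q)
      + (-G) * (\<Sum>l\<le>k. real (k choose l) * (-G)^(k-l) * ((Top J gam m mu ^^ l) \<delta>) q)"
    unfolding coefE_Suc eq by (subst Top_lin) simp_all
  also have "\<dots> = (\<Sum>l\<le>Suc k. real (Suc k choose l) * (-G)^(Suc k-l) * ((Top J gam m mu ^^ l) \<delta>) q)"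
    by (rule pascal_sum[of k "-G" "\<lambda>l. ((Top J gam m mu ^^ l) \<delta>) q"])
  finally show ?case .
qed

lemma coefC_props:
  assumes mu: "\<And>i q. i < J \<Longrightarrow> q < m \<Longrightarrow> mu i q < m" and gam: "\<And>i. i < J \<Longrightarrow> gam i \<ge> 0"
    and d0: "\<And>q. \<delta> q \<ge> 0" and d1: "(\<Sum>q<m. \<delta> q) = 1"
  shows "(\<forall>q. ((Top J gam m mu ^^ l) \<delta>) q \<ge> 0) \<and> (\<Sum>q<m. ((Top J gam m mu ^^ l) \<delta>) q) = (\<Sum>i<J. gam i)^l"
proof (induction l)
  case 0 then show ?case using d0 d1 by simp
next
  case (Suc l)
  then show ?case using Top_nonneg[OF gam] Top_sum[OF mu] by simp
qed

definition Wf :: "(nat \<Rightarrow> real) \<Rightarrow> real \<Rightarrow> real \<Rightarrow> real" where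
  "Wf c G t = exp (- G * t) * (\<Sum>l. c l / fact l * t^l)"

lemma exp_summable_abs: "summable (\<lambda>n. \<bar>x\<bar>^n / fact n :: real)"
  using summable_exp[of "\<bar>x\<bar>"] by (simp add: divide_inverse mult.commute)

lemma coef_summable:
  fixes c :: "nat \<Rightarrow> real"
  assumes c: "\<And>l. 0 \<le> c l \<and> c l \<le> G^l"
  shows "summable (\<lambda>l. norm (c l / fact l * y^l))"
proof (rule summable_comparison_test'[OF exp_summable_abs[of "G * y"], of 0])
  fix n :: nat
  have G: "G \<ge> 0" using c[of 1] by simp
  have "norm (norm (c n / fact n * y^n)) = c n * \<bar>y\<bar>^n / fact n"
    using c[of n] by (simp add: abs_mult power_abs)
  also have "\<dots> \<le> G^n * \<bar>y\<bar>^n / fact n"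
    using c[of n] by (intro divide_right_mono mult_right_mono) auto
  also have "\<dots> = \<bar>G * y\<bar>^n / fact n" using G by (simp add: abs_mult power_mult_distrib)
  finally show "norm (norm (c n / fact n * y^n)) \<le> \<bar>G * y\<bar>^n / fact n" .
qed

lemma fact_coef_eq: fixes t G :: real and c :: "nat \<Rightarrow> real" assumes l: "l \<le> k"
  shows "(- G * t)^(k-l) / fact (k-l) * (c l / fact l * t^l) = t^k / fact k * (real (k choose l) * (-G)^(k-l) * c l)"
proof -
  have ch: "real (k choose l) / fact k = 1 / (fact l * fact (k - l))"
    using l by (simp add: binomial_fact)
  have tk: "t^k = t^(k-l) * t^l" using l by (simp add: power_add[symmetric])
  have "t^k / fact k * (real (k choose l) * (-G)^(k-l) * c l) = (t^k * (-G)^(k-l) * c l) * (real (k choose l) / fact k)"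
    by simp
  also have "\<dots> = (t^k * (-G)^(k-l) * c l) / (fact l * fact (k - l))"
    unfolding ch by simp
  also have "\<dots> = (- G * t)^(k-l) / fact (k-l) * (c l / fact l * t^l)"
    unfolding tk power_mult_distrib by (simp add: mult_ac)
  finally show ?thesis by simp
qed
lemma Wf_sums:
  fixes c :: "nat \<Rightarrow> real"
  assumes c: "\<And>l. 0 \<le> c l \<and> c l \<le> G^l"
  shows "(\<lambda>k. t^k / fact k * (\<Sum>l\<le>k. real (k choose l) * (-G)^(k-l) * c l)) sums Wf c G t"
proof -
  define a where "a k = (- G * t)^k / fact k" for k
  define b where "b l = c l / fact l * t^l" for l
  have sa: "summable (\<lambda>k. norm (a k))"
    unfolding a_def using exp_summable_abs[of "- G * t"] by (simp add: power_abs)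
  have sb: "summable (\<lambda>k. norm (b k))"
    unfolding b_def by (rule coef_summable[OF c])
  have ea: "(\<Sum>k. a k) = exp (- G * t)"
    using exp_converges[of "- G * t"] unfolding a_def by (simp add: sums_iff divide_inverse mult.commute)
  have eq: "(\<Sum>i\<le>k. a i * b (k - i)) = t^k / fact k * (\<Sum>l\<le>k. real (k choose l) * (-G)^(k-l) * c l)" for k
  proof -
    have "(\<Sum>i\<le>k. a i * b (k - i)) = (\<Sum>l\<le>k. a (k - l) * b l)"
      using sum_diff_split[of 0 k "\<lambda>i. a i * b (k - i)"] by simp
    also have "\<dots> = (\<Sum>l\<le>k. t^k / fact k * (real (k choose l) * (-G)^(k-l) * c l))"
    proof (intro sum.cong refl)
      fix l assume "l \<in> {..k}"
      then have l: "l \<le> k" by simp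
      show "a (k - l) * b l = t^k / fact k * (real (k choose l) * (-G)^(k-l) * c l)"
        unfolding a_def b_def by (rule fact_coef_eq[OF l])
    qed
    also have "\<dots> = t^k / fact k * (\<Sum>l\<le>k. real (k choose l) * (-G)^(k-l) * c l)"
      by (simp add: sum_distrib_left)
    finally show ?thesis .
  qed
  have "(\<lambda>k. \<Sum>i\<le>k. a i * b (k - i)) sums ((\<Sum>k. a k) * (\<Sum>k. b k))"
    by (rule Cauchy_product_sums[OF sa sb])
  then have "(\<lambda>k. \<Sum>i\<le>k. a i * b (k - i)) sums (exp (- G * t) * (\<Sum>k. b k))"
    by (simp only: ea)
  then have "(\<lambda>k. t^k / fact k * (\<Sum>l\<le>k. real (k choose l) * (-G)^(k-l) * c l)) sums (exp (- G * t) * (\<Sum>k. b k))"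
    by (simp only: eq)
  then show ?thesis unfolding Wf_def b_def .
qed

lemma Wf_nonneg:
  assumes c: "\<And>l. 0 \<le> c l \<and> c l \<le> G^l" and t: "t \<ge> 0"
  shows "Wf c G t \<ge> 0"
proof -
  have "summable (\<lambda>l. c l / fact l * t^l)"
    using coef_summable[OF c, of t] by (rule summable_norm_cancel)
  then have "(\<Sum>l. c l / fact l * t^l) \<ge> 0"
    by (rule suminf_nonneg) (use c t in auto)
  then show ?thesis unfolding Wf_def by simp
qed

lemma Wf_cont:
  assumes c: "\<And>l. 0 \<le> c l \<and> c l \<le> G^l"
  shows "isCont (Wf c G) t"
proof -
  have s: "summable (\<lambda>l. c l / fact l * y^l)" for y
    by (rule summable_norm_cancel[OF coef_summable[OF c]])
  have F: "isCont (\<lambda>x. \<Sum>l. c l / fact l * x^l) t"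
    by (rule isCont_powser_converges_everywhere[OF s])
  have E: "isCont (\<lambda>x. exp (- G * x)) t"
    by (intro continuous_intros)
  have "isCont (\<lambda>x. exp (- G * x) * (\<Sum>l. c l / fact l * x^l)) t"
    by (rule isCont_mult[OF E F])
  then show ?thesis unfolding Wf_def[abs_def] .
qed

lemma Wf_sum:
  fixes C :: "nat \<Rightarrow> nat \<Rightarrow> real"
  assumes c: "\<And>q l. q < m \<Longrightarrow> 0 \<le> C q l \<and> C q l \<le> G^l"
    and s: "\<And>l. (\<Sum>q<m. C q l) = G^l"
  shows "(\<Sum>q<m. Wf (C q) G t) = 1"
proof -
  have sm: "summable (\<lambda>l. C q l / fact l * t^l)" if "q \<in> {..<m}" for q
  proof -
    have cq: "\<And>l. 0 \<le> C q l \<and> C q l \<le> G^l" using c that by auto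
    show ?thesis by (rule summable_norm_cancel[OF coef_summable[OF cq]])
  qed
  have "(\<Sum>q<m. Wf (C q) G t) = exp (- G * t) * (\<Sum>q<m. \<Sum>l. C q l / fact l * t^l)"
    unfolding Wf_def by (simp add: sum_distrib_left)
  also have "(\<Sum>q<m. \<Sum>l. C q l / fact l * t^l) = (\<Sum>l. \<Sum>q<m. C q l / fact l * t^l)"
    by (rule suminf_sum[symmetric]) (rule sm)
  also have "\<dots> = (\<Sum>l. (G * t)^l / fact l)"
    by (simp add: sum_divide_distrib[symmetric] sum_distrib_right[symmetric] s power_mult_distrib)
  also have "\<dots> = exp (G * t)"
    using exp_converges[of "G * t"] by (simp add: sums_iff divide_inverse mult.commute)
  finally show ?thesis by (simp add: exp_add[symmetric])
qed

definition qform :: "nat \<Rightarrow> (nat \<Rightarrow> nat \<Rightarrow> complex) \<Rightarrow> (nat \<Rightarrow> complex) \<Rightarrow> complex" where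
  "qform n E v = (\<Sum>i<n. \<Sum>j<n. cnj (v i) * E i j * v j)"

lemma psd_qform: "psd d A \<longleftrightarrow> A \<in> carrier_mat d d \<and> (\<forall>v. qform d (\<lambda>i j. A $$ (i,j)) v \<in> \<real> \<and> Re (qform d (\<lambda>i j. A $$ (i,j)) v) \<ge> 0)"
  unfolding psd_def qform_def by simp

lemma qform_congr:
  fixes V :: "nat \<Rightarrow> nat \<Rightarrow> complex"
  assumes E: "\<And>i j. i < n \<Longrightarrow> j < n \<Longrightarrow> E i j = (\<Sum>l<p. \<Sum>l'<p. cnj (V l i) * M l l' * V l' j)"
  shows "qform n E v = qform p M (\<lambda>l. \<Sum>j<n. V l j * v j)"
proof -
  have "qform p M (\<lambda>l. \<Sum>j<n. V l j * v j) =
     (\<Sum>l<p. \<Sum>l'<p. (\<Sum>i<n. cnj (V l i) * cnj (v i)) * M l l' * (\<Sum>j<n. V l' j * v j))"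
    unfolding qform_def by (simp add: cnj_sum)
  also have "\<dots> = (\<Sum>l<p. \<Sum>l'<p. \<Sum>i<n. \<Sum>j<n. cnj (V l i) * cnj (v i) * M l l' * (V l' j * v j))"
    by (simp only: sum_distrib_right, simp only: sum_distrib_left)
  also have "\<dots> = (\<Sum>l<p. \<Sum>i<n. \<Sum>l'<p. \<Sum>j<n. cnj (V l i) * cnj (v i) * M l l' * (V l' j * v j))"
    by (rule sum.cong[OF refl], rule sum.swap)
  also have "\<dots> = (\<Sum>l<p. \<Sum>i<n. \<Sum>j<n. \<Sum>l'<p. cnj (V l i) * cnj (v i) * M l l' * (V l' j * v j))"
    by (rule sum.cong[OF refl], rule sum.cong[OF refl], rule sum.swap)
  also have "\<dots> = (\<Sum>i<n. \<Sum>l<p. \<Sum>j<n. \<Sum>l'<p. cnj (V l i) * cnj (v i) * M l l' * (V l' j * v j))"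
    by (rule sum.swap)
  also have "\<dots> = (\<Sum>i<n. \<Sum>j<n. \<Sum>l<p. \<Sum>l'<p. cnj (V l i) * cnj (v i) * M l l' * (V l' j * v j))"
    by (rule sum.cong[OF refl], rule sum.swap)
  also have "\<dots> = qform n E v"
    unfolding qform_def
    by (intro sum.cong refl) (simp add: E sum_distrib_left sum_distrib_right mult_ac)
  finally show ?thesis by simp
qed

lemma qform_sum:
  assumes "\<And>i j. i < n \<Longrightarrow> j < n \<Longrightarrow> E i j = (\<Sum>q\<in>S. F q i j)"
  shows "qform n E v = (\<Sum>q\<in>S. qform n (F q) v)"
  unfolding qform_def using assms
  by (simp add: sum_distrib_left sum_distrib_right sum.swap[of _ S])

definition Phi :: "nat \<Rightarrow> nat \<Rightarrow> (nat \<Rightarrow> complex mat) \<Rightarrow> complex mat \<Rightarrow> complex mat" where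
  "Phi d m Qf M = mat d d (\<lambda>(i,j). \<Sum>q<m. \<Sum>a<d. \<Sum>b<d. Qf q $$ (i,a) * M $$ (a*m+q, b*m+q) * cnj (Qf q $$ (j,b)))"

lemma idx_bound: "a < d \<Longrightarrow> q < (m::nat) \<Longrightarrow> a*m+q < d*m"
proof -
  assume a: "a < d" and q: "q < m"
  have "a*m+q < (a+1)*m" using q by simp
  also have "\<dots> \<le> d*m" using a by (intro mult_le_mono1) simp
  finally show ?thesis .
qed

lemma idx_div: "q < (m::nat) \<Longrightarrow> (a*m+q) div m = a" "q < (m::nat) \<Longrightarrow> (a*m+q) mod m = q"
  by simp_all

lemma split3: fixes h :: "nat \<Rightarrow> 'a::comm_monoid_add" shows "(\<Sum>l<d*m*k. h l) = (\<Sum>a<d. \<Sum>q<m. \<Sum>r<k. h ((a*m+q)*k + r))"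
proof -
  have "(\<Sum>l<d*m*k. h l) = (\<Sum>p<d*m. \<Sum>r<k. h (p*k+r))" using sum_split_mult[of h "d*m" k] by simp
  also have "\<dots> = (\<Sum>a<d. \<Sum>q<m. \<Sum>r<k. h ((a*m+q)*k + r))" using sum_split_mult[of "\<lambda>p. \<Sum>r<k. h (p*k+r)" d m] by simp
  finally show ?thesis .
qed

lemma collapse2:
  fixes X :: "nat \<Rightarrow> nat \<Rightarrow> complex"
  assumes "q < m" "s0 < k"
  shows "(\<Sum>q'<m. \<Sum>s<k. (if q' = q then (if s = s0 then X q' s else 0) else 0)) = X q s0"
proof -
  have "(\<Sum>s<k. (if q' = q then (if s = s0 then X q' s else 0) else 0)) = (if q' = q then X q' s0 else 0)" for q'
    using assms(2) by (cases "q' = q") simp_all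
  then show ?thesis using assms(1) by simp
qed

lemma idxk: "s < (k::nat) \<Longrightarrow> (p*k+s) div k = p" "s < (k::nat) \<Longrightarrow> (p*k+s) mod k = s"
  by simp_all

definition Vq :: "nat \<Rightarrow> nat \<Rightarrow> nat \<Rightarrow> complex mat \<Rightarrow> nat \<Rightarrow> nat \<Rightarrow> complex" where
  "Vq m k q Q l i = (if (l div k) mod m = q then (if l mod k = i mod k then cnj (Q $$ (i div k, (l div k) div m)) else 0) else 0)"

lemma Vq_at: "s < k \<Longrightarrow> q' < m \<Longrightarrow> Vq m k q Q ((b*m+q')*k+s) j = (if q' = q then (if s = j mod k then cnj (Q $$ (j div k, b)) else 0) else 0)"
  by (simp add: Vq_def idxk)

lemma cnj_Vq_at: "s < k \<Longrightarrow> q' < m \<Longrightarrow> cnj (Vq m k q Q ((b*m+q')*k+s) j) = (if q' = q then (if s = j mod k then Q $$ (j div k, b) else 0) else 0)"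
  by (simp add: Vq_at)

lemma Fq_eq:
  fixes Mf :: "nat \<Rightarrow> nat \<Rightarrow> complex" and Q :: "complex mat"
  assumes q: "q < m" and i: "i < d*k" and j: "j < d*k"
  shows "(\<Sum>a<d. \<Sum>b<d. Q $$ (i div k, a) * Mf ((a*m+q)*k + i mod k) ((b*m+q)*k + j mod k) * cnj (Q $$ (j div k, b)))
    = (\<Sum>l<d*m*k. \<Sum>l'<d*m*k. cnj (Vq m k q Q l i) * Mf l l' * Vq m k q Q l' j)"
proof -
  have jk: "j mod k < k" using j by (rule mod_less_mult)
  have ik: "i mod k < k" using i by (rule mod_less_mult)
  have inner: "(\<Sum>l'<d*m*k. Mf l l' * Vq m k q Q l' j) = (\<Sum>b<d. Mf l ((b*m+q)*k + j mod k) * cnj (Q $$ (j div k, b)))" for l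
  proof -
    have "(\<Sum>l'<d*m*k. Mf l l' * Vq m k q Q l' j) = (\<Sum>b<d. \<Sum>q'<m. \<Sum>s<k. Mf l ((b*m+q')*k+s) * Vq m k q Q ((b*m+q')*k+s) j)"
      by (rule split3)
    also have "\<dots> = (\<Sum>b<d. \<Sum>q'<m. \<Sum>s<k. (if q' = q then (if s = j mod k then Mf l ((b*m+q')*k+s) * cnj (Q $$ (j div k, b)) else 0) else 0))"
      by (intro sum.cong refl) (simp add: Vq_at)
    also have "\<dots> = (\<Sum>b<d. Mf l ((b*m+q)*k + j mod k) * cnj (Q $$ (j div k, b)))"
    proof (rule sum.cong[OF refl])
      fix b
      show "(\<Sum>q'<m. \<Sum>s<k. (if q' = q then (if s = j mod k then Mf l ((b*m+q')*k+s) * cnj (Q $$ (j div k, b)) else 0) else 0))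
          = Mf l ((b*m+q)*k + j mod k) * cnj (Q $$ (j div k, b))"
        using collapse2[OF q jk, of "\<lambda>q' s. Mf l ((b*m+q')*k+s) * cnj (Q $$ (j div k, b))"] by simp
    qed
    finally show ?thesis .
  qed
  have "(\<Sum>l<d*m*k. \<Sum>l'<d*m*k. cnj (Vq m k q Q l i) * Mf l l' * Vq m k q Q l' j)
      = (\<Sum>l<d*m*k. cnj (Vq m k q Q l i) * (\<Sum>l'<d*m*k. Mf l l' * Vq m k q Q l' j))"
    by (simp add: sum_distrib_left mult.assoc)
  also have "\<dots> = (\<Sum>l<d*m*k. cnj (Vq m k q Q l i) * (\<Sum>b<d. Mf l ((b*m+q)*k + j mod k) * cnj (Q $$ (j div k, b))))"
    by (simp only: inner)
  also have "\<dots> = (\<Sum>a<d. \<Sum>q'<m. \<Sum>r<k. cnj (Vq m k q Q ((a*m+q')*k+r) i) * (\<Sum>b<d. Mf ((a*m+q')*k+r) ((b*m+q)*k + j mod k) * cnj (Q $$ (j div k, b))))"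
    by (rule split3)
  also have "\<dots> = (\<Sum>a<d. \<Sum>q'<m. \<Sum>r<k. (if q' = q then (if r = i mod k then Q $$ (i div k, a) * (\<Sum>b<d. Mf ((a*m+q')*k+r) ((b*m+q)*k + j mod k) * cnj (Q $$ (j div k, b))) else 0) else 0))"
    by (intro sum.cong refl) (simp add: cnj_Vq_at)
  also have "\<dots> = (\<Sum>a<d. Q $$ (i div k, a) * (\<Sum>b<d. Mf ((a*m+q)*k+i mod k) ((b*m+q)*k + j mod k) * cnj (Q $$ (j div k, b))))"
  proof (rule sum.cong[OF refl])
    fix a
    show "(\<Sum>q'<m. \<Sum>r<k. (if q' = q then (if r = i mod k then Q $$ (i div k, a) * (\<Sum>b<d. Mf ((a*m+q')*k+r) ((b*m+q)*k + j mod k) * cnj (Q $$ (j div k, b))) else 0) else 0))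
      = Q $$ (i div k, a) * (\<Sum>b<d. Mf ((a*m+q)*k+i mod k) ((b*m+q)*k + j mod k) * cnj (Q $$ (j div k, b)))"
      using collapse2[OF q ik, of "\<lambda>q' r. Q $$ (i div k, a) * (\<Sum>b<d. Mf ((a*m+q')*k+r) ((b*m+q)*k + j mod k) * cnj (Q $$ (j div k, b)))"] by simp
  qed
  also have "\<dots> = (\<Sum>a<d. \<Sum>b<d. Q $$ (i div k, a) * Mf ((a*m+q)*k + i mod k) ((b*m+q)*k + j mod k) * cnj (Q $$ (j div k, b)))"
    by (simp add: sum_distrib_left mult.assoc)
  finally show ?thesis by simp
qed

lemma Phi_CP:
  assumes M: "psd (d*m*k) M"
  shows "psd (d*k) (ext_id (d*m) d k (Phi d m Qf) M)"
proof -
  define E where "E = ext_id (d*m) d k (Phi d m Qf) M"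
  define F where "F q i j = (\<Sum>a<d. \<Sum>b<d. Qf q $$ (i div k, a) * M $$ ((a*m+q)*k + i mod k, (b*m+q)*k + j mod k) * cnj (Qf q $$ (j div k, b)))" for q i j
  have Ec: "E \<in> carrier_mat (d*k) (d*k)"
    unfolding E_def ext_id_def by (rule carrier_matI) simp_all
  have Ee: "E $$ (i,j) = (\<Sum>q<m. F q i j)" if i: "i < d*k" and j: "j < d*k" for i j
  proof -
    have id: "i div k < d" "j div k < d" using i j by (simp_all add: div_less_mult)
    have "E $$ (i,j) = Phi d m Qf (mat (d*m) (d*m) (\<lambda>(x,y). M $$ (x*k + i mod k, y*k + j mod k))) $$ (i div k, j div k)"
      unfolding E_def ext_id_def using i j by simp
    also have "\<dots> = (\<Sum>q<m. \<Sum>a<d. \<Sum>b<d. Qf q $$ (i div k, a) * (mat (d*m) (d*m) (\<lambda>(x,y). M $$ (x*k + i mod k, y*k + j mod k))) $$ (a*m+q, b*m+q) * cnj (Qf q $$ (j div k, b)))"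
      unfolding Phi_def using id by simp
    also have "\<dots> = (\<Sum>q<m. F q i j)"
      unfolding F_def by (intro sum.cong refl) (simp add: idx_bound)
    finally show ?thesis .
  qed
  have Mq: "\<forall>w. qform (d*m*k) (\<lambda>l l'. M $$ (l,l')) w \<in> \<real> \<and> Re (qform (d*m*k) (\<lambda>l l'. M $$ (l,l')) w) \<ge> 0"
    using M unfolding psd_qform by blast
  have "qform (d*k) (\<lambda>i j. E $$ (i,j)) v \<in> \<real> \<and> Re (qform (d*k) (\<lambda>i j. E $$ (i,j)) v) \<ge> 0" for v
  proof -
    have "qform (d*k) (\<lambda>i j. E $$ (i,j)) v = (\<Sum>q\<in>{..<m}. qform (d*k) (F q) v)"
      by (rule qform_sum) (simp add: Ee)
    also have "\<dots> = (\<Sum>q\<in>{..<m}. qform (d*m*k) (\<lambda>l l'. M $$ (l,l')) (\<lambda>l. \<Sum>j<d*k. Vq m k q (Qf q) l j * v j))"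
    proof (rule sum.cong[OF refl])
      fix q assume "q \<in> {..<m}"
      then have q: "q < m" by simp
      show "qform (d*k) (F q) v = qform (d*m*k) (\<lambda>l l'. M $$ (l,l')) (\<lambda>l. \<Sum>j<d*k. Vq m k q (Qf q) l j * v j)"
        by (rule qform_congr) (unfold F_def, rule Fq_eq[OF q])
    qed
    finally show ?thesis using Mq by (simp add: sum_nonneg)
  qed
  then show ?thesis unfolding psd_qform E_def[symmetric] using Ec by blast
qed

lemma Phi_cptp:
  assumes Qc: "\<And>q. q < m \<Longrightarrow> Qf q \<in> carrier_mat d d"
    and U: "\<And>q. q < m \<Longrightarrow> adj (Qf q) * Qf q = 1\<^sub>m d"
  shows "cptp (d*m) d (Phi d m Qf)"
proof -
  have car: "Phi d m Qf A \<in> carrier_mat d d" for A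
    unfolding Phi_def by (rule carrier_matI) simp_all
  have add: "Phi d m Qf (A + B) = Phi d m Qf A + Phi d m Qf B"
    if A: "A \<in> carrier_mat (d*m) (d*m)" and B: "B \<in> carrier_mat (d*m) (d*m)" for A B
  proof (rule eq_matI)
    have dB: "dim_row B = d*m" "dim_col B = d*m" using B by (simp_all add: carrier_matD)
    fix i j assume "i < dim_row (Phi d m Qf A + Phi d m Qf B)" "j < dim_col (Phi d m Qf A + Phi d m Qf B)"
    then have i: "i < d" and j: "j < d" unfolding Phi_def by simp_all
    have "Phi d m Qf (A + B) $$ (i,j) = (\<Sum>q<m. \<Sum>a<d. \<Sum>b<d. Qf q $$ (i,a) * (A + B) $$ (a*m+q, b*m+q) * cnj (Qf q $$ (j,b)))"
      unfolding Phi_def using i j by simp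
    also have "\<dots> = (\<Sum>q<m. \<Sum>a<d. \<Sum>b<d. Qf q $$ (i,a) * A $$ (a*m+q, b*m+q) * cnj (Qf q $$ (j,b)) + Qf q $$ (i,a) * B $$ (a*m+q, b*m+q) * cnj (Qf q $$ (j,b)))"
      by (intro sum.cong refl) (simp add: idx_bound dB distrib_left distrib_right)
    also have "\<dots> = Phi d m Qf A $$ (i,j) + Phi d m Qf B $$ (i,j)"
      unfolding Phi_def using i j by (simp add: sum.distrib)
    also have "\<dots> = (Phi d m Qf A + Phi d m Qf B) $$ (i,j)"
      using i j by (simp add: Phi_def)
    finally show "Phi d m Qf (A + B) $$ (i,j) = (Phi d m Qf A + Phi d m Qf B) $$ (i,j)" .
  qed (simp_all add: Phi_def)
  have smul: "Phi d m Qf (c \<cdot>\<^sub>m A) = c \<cdot>\<^sub>m Phi d m Qf A"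
    if A: "A \<in> carrier_mat (d*m) (d*m)" for A c
  proof (rule eq_matI)
    have dA: "dim_row A = d*m" "dim_col A = d*m" using A by (simp_all add: carrier_matD)
    fix i j assume "i < dim_row (c \<cdot>\<^sub>m Phi d m Qf A)" "j < dim_col (c \<cdot>\<^sub>m Phi d m Qf A)"
    then have i: "i < d" and j: "j < d" unfolding Phi_def by simp_all
    have "Phi d m Qf (c \<cdot>\<^sub>m A) $$ (i,j) = (\<Sum>q<m. \<Sum>a<d. \<Sum>b<d. Qf q $$ (i,a) * (c \<cdot>\<^sub>m A) $$ (a*m+q, b*m+q) * cnj (Qf q $$ (j,b)))"
      unfolding Phi_def using i j by simp
    also have "\<dots> = (\<Sum>q<m. \<Sum>a<d. \<Sum>b<d. c * (Qf q $$ (i,a) * A $$ (a*m+q, b*m+q) * cnj (Qf q $$ (j,b))))"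
      by (intro sum.cong refl) (simp add: idx_bound dA mult_ac)
    also have "\<dots> = (c \<cdot>\<^sub>m Phi d m Qf A) $$ (i,j)"
      unfolding Phi_def using i j by (simp add: sum_distrib_left)
    finally show "Phi d m Qf (c \<cdot>\<^sub>m A) $$ (i,j) = (c \<cdot>\<^sub>m Phi d m Qf A) $$ (i,j)" .
  qed (simp_all add: Phi_def)
  have unit: "(\<Sum>i<d. Qf q $$ (i,a) * cnj (Qf q $$ (i,b))) = (if a = b then 1 else 0)"
    if q: "q < m" and a: "a < d" and b: "b < d" for q a b
  proof -
    have aQ: "adj (Qf q) \<in> carrier_mat d d" using Qc[OF q] by (intro carrier_matI) (simp_all add: carrier_matD)
    have "(adj (Qf q) * Qf q) $$ (b,a) = (\<Sum>i<d. adj (Qf q) $$ (b,i) * Qf q $$ (i,a))"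
      by (rule mult_entry[OF aQ Qc[OF q] b a])
    also have "\<dots> = (\<Sum>i<d. Qf q $$ (i,a) * cnj (Qf q $$ (i,b)))"
      using Qc[OF q] b by (intro sum.cong refl) (simp add: adj_index carrier_matD mult.commute)
    finally have "(\<Sum>i<d. Qf q $$ (i,a) * cnj (Qf q $$ (i,b))) = 1\<^sub>m d $$ (b,a)" using U[OF q] by simp
    then show ?thesis using a b by auto
  qed
  have tr: "tr (Phi d m Qf A) = tr A" if A: "A \<in> carrier_mat (d*m) (d*m)" for A
  proof -
    have "tr (Phi d m Qf A) = (\<Sum>i<d. \<Sum>q<m. \<Sum>a<d. \<Sum>b<d. Qf q $$ (i,a) * A $$ (a*m+q, b*m+q) * cnj (Qf q $$ (i,b)))"
      unfolding tr_def Phi_def by simp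
    also have "\<dots> = (\<Sum>q<m. \<Sum>i<d. \<Sum>a<d. \<Sum>b<d. Qf q $$ (i,a) * A $$ (a*m+q, b*m+q) * cnj (Qf q $$ (i,b)))"
      by (rule sum.swap)
    also have "\<dots> = (\<Sum>q<m. \<Sum>a<d. \<Sum>i<d. \<Sum>b<d. Qf q $$ (i,a) * A $$ (a*m+q, b*m+q) * cnj (Qf q $$ (i,b)))"
      by (rule sum.cong[OF refl], rule sum.swap)
    also have "\<dots> = (\<Sum>q<m. \<Sum>a<d. \<Sum>b<d. \<Sum>i<d. Qf q $$ (i,a) * A $$ (a*m+q, b*m+q) * cnj (Qf q $$ (i,b)))"
      by (rule sum.cong[OF refl], rule sum.cong[OF refl], rule sum.swap)
    also have "\<dots> = (\<Sum>q<m. \<Sum>a<d. \<Sum>b<d. A $$ (a*m+q, b*m+q) * (\<Sum>i<d. Qf q $$ (i,a) * cnj (Qf q $$ (i,b))))"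
      by (simp add: sum_distrib_left mult_ac)
    also have "\<dots> = (\<Sum>q<m. \<Sum>a<d. A $$ (a*m+q, a*m+q))"
      by (intro sum.cong refl) (simp add: unit if_distrib sum.delta cong: if_cong)
    also have "\<dots> = (\<Sum>a<d. \<Sum>q<m. A $$ (a*m+q, a*m+q))"
      by (rule sum.swap)
    also have "\<dots> = (\<Sum>l<d*m. A $$ (l,l))"
      by (rule sum_split_mult[symmetric])
    also have "\<dots> = tr A"
      unfolding tr_def using A by (simp add: carrier_matD)
    finally show ?thesis .
  qed
  show ?thesis
    unfolding cptp_def using car add smul tr Phi_CP by blast
qed

lemma ps_sq: "set xs \<subseteq> {0..<4} \<Longrightarrow> pauli_string xs * pauli_string xs = 1\<^sub>m (2^length xs)"
proof (induction xs)
  case Nil then show ?case by (simp add: ps_Nil)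
next
  case (Cons a xs)
  have a: "a < 4" using Cons.prems by simp
  have "pauli_string (a#xs) * pauli_string (a#xs) = kron (pauli1 a * pauli1 a) (pauli_string xs * pauli_string xs)"
    unfolding ps_Cons by (rule kron_mult[OF pauli1_carrier ps_carrier pauli1_carrier ps_carrier])
  also have "\<dots> = kron (1\<^sub>m 2) (1\<^sub>m (2^length xs))"
    using Cons by (simp add: pauli1_prod[OF a a] ptab_c_def ptab_e_def pauli1_zero one_smult_mat')
  also have "\<dots> = 1\<^sub>m (2^length (a#xs))" by (simp add: kron_one)
  finally show ?case .
qed

lemma ps_rep0: "pauli_string (replicate n 0) = 1\<^sub>m (2^n)"
  by (induction n) (simp_all add: ps_Nil ps_Cons pauli1_zero kron_one)

lemma conj_step:
  fixes P Q Q' \<rho> :: "complex mat"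
  assumes P: "P \<in> carrier_mat d d" and Q: "Q \<in> carrier_mat d d" and Q': "Q' \<in> carrier_mat d d" and rho: "\<rho> \<in> carrier_mat d d"
    and hP: "adj P = P" and hQ: "adj Q = Q" and hQ': "adj Q' = Q'" and c: "c * cnj c = 1"
    and PQ: "P * Q = c \<cdot>\<^sub>m Q'"
  shows "P * (Q * \<rho> * Q) * P = Q' * \<rho> * Q'"
proof -
  have QP: "Q * P = cnj c \<cdot>\<^sub>m Q'"
  proof -
    have "Q * P = adj (P * Q)" using adj_mult[OF P Q] hP hQ by simp
    also have "\<dots> = cnj c \<cdot>\<^sub>m Q'" using PQ hQ' by (simp add: adj_smult)
    finally show ?thesis .
  qed
  have "P * (Q * \<rho> * Q) * P = (P * Q) * \<rho> * (Q * P)"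
    using P Q rho by (simp add: assoc_mult_mat[of _ d d _ d _ d])
  also have "\<dots> = (c \<cdot>\<^sub>m Q') * \<rho> * (cnj c \<cdot>\<^sub>m Q')" by (simp only: PQ QP)
  also have "\<dots> = (c * cnj c) \<cdot>\<^sub>m (Q' * \<rho> * Q')"
    using Q' rho
    by (simp add: mult_smult_assoc_mat[of _ d d _ d] mult_smult_distrib[of _ d d _ d] smult_smult_mat mult.commute)
  also have "\<dots> = Q' * \<rho> * Q'" using c by (simp add: one_smult_mat')
  finally show ?thesis .
qed

lemma lindblad_entry:
  assumes X: "X \<in> carrier_mat d d" and a: "a < d" and b: "b < d"
    and J: "\<And>x. x \<in> set jumps \<Longrightarrow> snd x \<in> carrier_mat d d \<and> adj (snd x) = snd x \<and> snd x * snd x = 1\<^sub>m d"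
  shows "lindblad d jumps X $$ (a,b) = (\<Sum>i<length jumps. of_real (fst (jumps!i)) * ((snd (jumps!i) * X * snd (jumps!i)) $$ (a,b) - X $$ (a,b)))"
proof -
  have dX: "dim_row X = d" "dim_col X = d" using X by (simp_all add: carrier_matD)
  have "lindblad d jumps X $$ (a,b) = (\<Sum>(g,L)\<leftarrow>jumps. complex_of_real g *
        (L * X * adj L - (1/2) \<cdot>\<^sub>m (adj L * L * X + X * (adj L * L))) $$ (a,b))"
    unfolding lindblad_def using a b by simp
  also have "\<dots> = (\<Sum>i<length jumps. (\<lambda>(g,L). complex_of_real g *
        (L * X * adj L - (1/2) \<cdot>\<^sub>m (adj L * L * X + X * (adj L * L))) $$ (a,b)) (jumps!i))"
    by (simp add: sum_list_sum_nth atLeast0LessThan)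
  also have "\<dots> = (\<Sum>i<length jumps. of_real (fst (jumps!i)) * ((snd (jumps!i) * X * snd (jumps!i)) $$ (a,b) - X $$ (a,b)))"
  proof (rule sum.cong[OF refl])
    fix i assume "i \<in> {..<length jumps}"
    then have "jumps!i \<in> set jumps" by simp
    then have L: "snd (jumps!i) \<in> carrier_mat d d" "adj (snd (jumps!i)) = snd (jumps!i)" "snd (jumps!i) * snd (jumps!i) = 1\<^sub>m d"
      using J by auto
    obtain g L where gL: "jumps!i = (g,L)" by (cases "jumps!i")
    have dL: "dim_row L = d" "dim_col L = d" using L(1) gL by (simp_all add: carrier_matD)
    have "(L * X * adj L - (1/2) \<cdot>\<^sub>m (adj L * L * X + X * (adj L * L))) $$ (a,b) = (L * X * L) $$ (a,b) - X $$ (a,b)"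
      using L gL a b X dL dX by simp
    then show "(\<lambda>(g,L). complex_of_real g * (L * X * adj L - (1/2) \<cdot>\<^sub>m (adj L * L * X + X * (adj L * L))) $$ (a,b)) (jumps!i)
        = of_real (fst (jumps!i)) * ((snd (jumps!i) * X * snd (jumps!i)) $$ (a,b) - X $$ (a,b))"
      using gL by simp
  qed
  finally show ?thesis .
qed


theorem theorem1:
  fixes n :: nat and jumps :: "(real \<times> complex mat) list"
  assumes "n \<ge> 1"
    and "\<forall>(g,P) \<in> set jumps. g \<ge> 0 \<and> is_pauli n P"
  shows "quantum_programmable (2^n) (lindblad (2^n) jumps)"
proof -
  define d where "d = (2::nat)^n"
  define NL where "NL = List.n_lists n [0..<(4::nat)]"
  define m where "m = length NL"
  define Qf where "Qf q = pauli_string (NL ! q)" for q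
  define J where "J = length jumps"
  define gam where "gam i = fst (jumps ! i)" for i
  define Pm where "Pm i = snd (jumps ! i)" for i
  define G where "G = (\<Sum>i<J. gam i)"
  define L where "L = lindblad d jumps"
  have NLq: "length (NL!q) = n \<and> set (NL!q) \<subseteq> {0..<4}" if "q < m" for q
  proof -
    have "NL!q \<in> set NL" using that by (simp add: m_def)
    then show ?thesis unfolding NL_def set_n_lists by simp
  qed
  have Qc: "Qf q \<in> carrier_mat d d" if "q < m" for q
    using ps_carrier[of "NL!q"] NLq[OF that] by (simp add: Qf_def d_def)
  have Qh: "adj (Qf q) = Qf q" for q by (simp add: Qf_def ps_adj)
  have Qu: "Qf q * Qf q = 1\<^sub>m d" if "q < m" for q
    using ps_sq[of "NL!q"] NLq[OF that] by (simp add: Qf_def d_def)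
  have Qu': "adj (Qf q) * Qf q = 1\<^sub>m d" if "q < m" for q
    using Qu[OF that] by (simp add: Qh)
  have jp: "gam i \<ge> 0 \<and> (\<exists>xs. length xs = n \<and> set xs \<subseteq> {0..<4} \<and> Pm i = pauli_string xs)" if "i < J" for i
  proof -
    have "jumps!i \<in> set jumps" using that by (simp add: J_def)
    obtain g P where gP: "jumps!i = (g,P)" by (cases "jumps!i")
    have "(g,P) \<in> set jumps" using \<open>jumps!i \<in> set jumps\<close> gP by simp
    then have "g \<ge> 0 \<and> is_pauli n P" using assms(2) by blast
    then have "fst (jumps!i) \<ge> 0 \<and> is_pauli n (snd (jumps!i))" using gP by simp
    then show ?thesis unfolding is_pauli_def gam_def Pm_def by auto
  qed
  have Pc: "Pm i \<in> carrier_mat d d" and Ph: "adj (Pm i) = Pm i" and Pu: "Pm i * Pm i = 1\<^sub>m d" if i: "i < J" for i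
  proof -
    obtain xs where xs: "length xs = n" "set xs \<subseteq> {0..<4}" "Pm i = pauli_string xs" using jp[OF i] by blast
    show "Pm i \<in> carrier_mat d d" using ps_carrier[of xs] xs by (simp add: d_def)
    show "adj (Pm i) = Pm i" using xs by (simp add: ps_adj)
    show "Pm i * Pm i = 1\<^sub>m d" using ps_sq[of xs] xs by (simp add: d_def)
  qed
  have mu_ex: "\<exists>q'. q' < m \<and> (\<exists>c. c * cnj c = 1 \<and> Pm i * Qf q = c \<cdot>\<^sub>m Qf q')" if i: "i < J" and q: "q < m" for i q
  proof -
    obtain xs where xs: "length xs = n" "set xs \<subseteq> {0..<4}" "Pm i = pauli_string xs" using jp[OF i] by blast
    obtain c zs where c: "c * cnj c = 1" and zs: "length zs = length xs" "set zs \<subseteq> {0..<4}"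
      and eq: "pauli_string xs * pauli_string (NL!q) = c \<cdot>\<^sub>m pauli_string zs"
      using ps_prod[of xs "NL!q"] xs NLq[OF q] by auto
    have "zs \<in> set NL" unfolding NL_def set_n_lists using zs xs by auto
    then obtain q' where q': "q' < m" "NL!q' = zs" unfolding m_def in_set_conv_nth by blast
    show ?thesis using q' c eq xs by (intro exI[of _ q']) (auto simp: Qf_def)
  qed
  define mu where "mu i q = (SOME q'. q' < m \<and> (\<exists>c. c * cnj c = 1 \<and> Pm i * Qf q = c \<cdot>\<^sub>m Qf q'))" for i q
  have mu: "mu i q < m \<and> (\<exists>c. c * cnj c = 1 \<and> Pm i * Qf q = c \<cdot>\<^sub>m Qf (mu i q))" if "i < J" "q < m" for i q
    unfolding mu_def by (rule someI_ex[OF mu_ex[OF that]])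
  obtain q0 where q0: "q0 < m" "NL ! q0 = replicate n 0"
  proof -
    have "replicate n 0 \<in> set NL" unfolding NL_def set_n_lists by auto
    then show ?thesis using that unfolding m_def in_set_conv_nth by blast
  qed
  have Q0: "Qf q0 = 1\<^sub>m d" by (simp add: Qf_def q0 ps_rep0 d_def)
  define \<delta> where "\<delta> = (\<lambda>q. if q = q0 then 1 else (0::real))"
  define C where "C q l = ((Top J gam m mu ^^ l) \<delta>) q" for q l
  define w where "w q t = Wf (C q) G t" for q t
  have mu': "\<And>i q. i < J \<Longrightarrow> q < m \<Longrightarrow> mu i q < m" using mu by blast
  have gam0: "\<And>i. i < J \<Longrightarrow> gam i \<ge> 0" using jp by blast
  have d0: "\<And>q. \<delta> q \<ge> 0" by (simp add: \<delta>_def)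
  have d1: "(\<Sum>q<m. \<delta> q) = 1" using q0(1) by (simp add: \<delta>_def)
  have Cp: "(\<forall>q. C q l \<ge> 0) \<and> (\<Sum>q<m. C q l) = G^l" for l
    using coefC_props[where J=J and gam=gam and m=m and mu=mu and \<delta>=\<delta> and l=l, OF mu' gam0 d0 d1] by (simp add: C_def G_def)
  have Cb: "0 \<le> C q l \<and> C q l \<le> G^l" if "q < m" for q l
  proof -
    have "C q l \<le> (\<Sum>q<m. C q l)"
      by (rule member_le_sum) (use that Cp in auto)
    then show ?thesis using Cp[of l] by simp
  qed
  have Lc: "L X \<in> carrier_mat d d" for X
    unfolding L_def lindblad_def by (rule carrier_matI) simp_all
  have Jset: "snd x \<in> carrier_mat d d \<and> adj (snd x) = snd x \<and> snd x * snd x = 1\<^sub>m d" if "x \<in> set jumps" for x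
  proof -
    from that obtain i where i: "i < length jumps" "jumps!i = x" by (auto simp: in_set_conv_nth)
    then have iJ: "i < J" by (simp add: J_def)
    have Px: "Pm i = snd x" using i(2) by (simp add: Pm_def)
    show ?thesis using Pc[OF iJ] Ph[OF iJ] Pu[OF iJ] unfolding Px by simp
  qed
  have Le: "L X $$ (a,b) = (\<Sum>i<J. of_real (gam i) * ((Pm i * X * Pm i) $$ (a,b) - X $$ (a,b)))"
    if "X \<in> carrier_mat d d" "a < d" "b < d" for X a b
    unfolding L_def J_def gam_def Pm_def by (rule lindblad_entry[OF that Jset])
  have expn: "(L^^k) \<rho> \<in> carrier_mat d d \<and> (\<forall>a<d. \<forall>b<d. (L^^k) \<rho> $$ (a,b) =
     (\<Sum>q<m. of_real (coefE J gam m mu \<delta> G k q) * (Qf q * \<rho> * Qf q) $$ (a,b)))"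
    if rho: "\<rho> \<in> carrier_mat d d" for \<rho> k
  proof -
    have mc: "mu i q < m \<and> Pm i * (Qf q * \<rho> * Qf q) * Pm i = Qf (mu i q) * \<rho> * Qf (mu i q)" if i: "i < J" and q: "q < m" for i q
    proof -
      obtain c where c: "c * cnj c = 1" "Pm i * Qf q = c \<cdot>\<^sub>m Qf (mu i q)" using mu[OF i q] by blast
      have "Pm i * (Qf q * \<rho> * Qf q) * Pm i = Qf (mu i q) * \<rho> * Qf (mu i q)"
        by (rule conj_step[OF Pc[OF i] Qc[OF q] Qc[OF mu'[OF i q]] rho Ph[OF i] Qh Qh c])
      then show ?thesis using mu'[OF i q] by simp
    qed
    have q0r: "Qf q0 * \<rho> * Qf q0 = \<rho>" using rho by (simp add: Q0 carrier_matD)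
    show ?thesis unfolding \<delta>_def
      by (rule expansion[where Pm=Pm, OF Lc Le Pc Qc rho mc q0(1) q0r G_def])
  qed
  have Ws: "(\<lambda>k. t^k / fact k * coefE J gam m mu \<delta> G k q) sums w q t" if q: "q < m" for q t
  proof -
    have "coefE J gam m mu \<delta> G k q = (\<Sum>l\<le>k. real (k choose l) * (-G)^(k-l) * C q l)" for k
      by (simp add: coefE_binom C_def)
    then show ?thesis using Wf_sums[of "C q" G t] Cb[OF q] by (simp add: w_def)
  qed
  have expE: "exp_super d L t \<rho> $$ (a,b) = (\<Sum>q<m. of_real (w q t) * (Qf q * \<rho> * Qf q) $$ (a,b))"
    if rho: "\<rho> \<in> carrier_mat d d" and a: "a < d" and b: "b < d" for \<rho> t a b
  proof -
    define A where "A q = (Qf q * \<rho> * Qf q) $$ (a,b)" for q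
    have s2: "(\<lambda>k. of_real (t^k / fact k * coefE J gam m mu \<delta> G k q) * A q) sums (of_real (w q t) * A q)" if q: "q < m" for q
      by (rule sums_mult2[OF sums_of_real[OF Ws[OF q]]])
    have "exp_super d L t \<rho> $$ (a,b) = (\<Sum>k. (complex_of_real t ^ k / of_nat (fact k)) * ((L^^k) \<rho>) $$ (a,b))"
      unfolding exp_super_def using a b by simp
    also have "\<dots> = (\<Sum>k. \<Sum>q<m. of_real (t^k / fact k * coefE J gam m mu \<delta> G k q) * A q)"
    proof (rule suminf_cong)
      fix k
      have "((L^^k) \<rho>) $$ (a,b) = (\<Sum>q<m. of_real (coefE J gam m mu \<delta> G k q) * A q)"
        using expn[OF rho, of k] a b by (simp add: A_def)
      then show "(complex_of_real t ^ k / of_nat (fact k)) * ((L^^k) \<rho>) $$ (a,b) = (\<Sum>q<m. of_real (t^k / fact k * coefE J gam m mu \<delta> G k q) * A q)"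
        by (simp add: sum_distrib_left mult.assoc)
    qed
    also have "\<dots> = (\<Sum>q<m. \<Sum>k. of_real (t^k / fact k * coefE J gam m mu \<delta> G k q) * A q)"
      by (rule suminf_sum) (use s2 sums_summable in auto)
    also have "\<dots> = (\<Sum>q<m. of_real (w q t) * A q)"
    proof (rule sum.cong[OF refl])
      fix q assume "q \<in> {..<m}"
      then have q: "q < m" by simp
      show "(\<Sum>k. of_real (t^k / fact k * coefE J gam m mu \<delta> G k q) * A q) = of_real (w q t) * A q"
        by (rule sums_unique[OF s2[OF q], symmetric])
    qed
    finally show ?thesis by (simp add: A_def)
  qed
  define \<pi> where "\<pi> t = mat m m (\<lambda>(i,j). if i = j then complex_of_real (w i t) else 0)" for t
  have main: "Phi d m Qf (kron \<rho> (\<pi> t)) = exp_super d L t \<rho>" if rho: "\<rho> \<in> carrier_mat d d" for \<rho> t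
  proof (rule eq_matI)
    have dr: "dim_row \<rho> = d" "dim_col \<rho> = d" using rho by (simp_all add: carrier_matD)
    fix i j assume "i < dim_row (exp_super d L t \<rho>)" "j < dim_col (exp_super d L t \<rho>)"
    then have i: "i < d" and j: "j < d" by (simp_all add: exp_super_def)
    have "Phi d m Qf (kron \<rho> (\<pi> t)) $$ (i,j) = (\<Sum>q<m. \<Sum>a<d. \<Sum>b<d. Qf q $$ (i,a) * kron \<rho> (\<pi> t) $$ (a*m+q, b*m+q) * cnj (Qf q $$ (j,b)))"
      unfolding Phi_def using i j by simp
    also have "\<dots> = (\<Sum>q<m. \<Sum>a<d. \<Sum>b<d. of_real (w q t) * (Qf q $$ (i,a) * \<rho> $$ (a,b) * Qf q $$ (b,j)))"
    proof (intro sum.cong refl)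
      fix q a b assume "q \<in> {..<m}" "a \<in> {..<d}" "b \<in> {..<d}"
      then have q: "q < m" and a: "a < d" and b: "b < d" by simp_all
      have "kron \<rho> (\<pi> t) $$ (a*m+q, b*m+q) = \<rho> $$ (a,b) * of_real (w q t)"
        using kron_index[of "a*m+q" \<rho> "\<pi> t" "b*m+q"] idx_bound[OF a q] idx_bound[OF b q] q
        by (simp add: dr \<pi>_def)
      moreover have "Qf q $$ (b,j) = cnj (Qf q $$ (j,b))"
      proof -
        have "Qf q $$ (b,j) = adj (Qf q) $$ (b,j)" by (simp add: Qh)
        also have "\<dots> = cnj (Qf q $$ (j,b))" using Qc[OF q] b j by (simp add: adj_index carrier_matD)
        finally show ?thesis .
      qed
      ultimately show "Qf q $$ (i,a) * kron \<rho> (\<pi> t) $$ (a*m+q, b*m+q) * cnj (Qf q $$ (j,b))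
          = of_real (w q t) * (Qf q $$ (i,a) * \<rho> $$ (a,b) * Qf q $$ (b,j))" by (simp add: mult_ac)
    qed
    also have "\<dots> = (\<Sum>q<m. of_real (w q t) * (Qf q * \<rho> * Qf q) $$ (i,j))"
    proof (rule sum.cong[OF refl])
      fix q assume "q \<in> {..<m}"
      then have q: "q < m" by simp
      show "(\<Sum>a<d. \<Sum>b<d. of_real (w q t) * (Qf q $$ (i,a) * \<rho> $$ (a,b) * Qf q $$ (b,j))) = of_real (w q t) * (Qf q * \<rho> * Qf q) $$ (i,j)"
        by (simp add: sandwich_entry[OF Qc[OF q] rho i j] sum_distrib_left)
    qed
    also have "\<dots> = exp_super d L t \<rho> $$ (i,j)" by (rule expE[OF rho i j, symmetric])
    finally show "Phi d m Qf (kron \<rho> (\<pi> t)) $$ (i,j) = exp_super d L t \<rho> $$ (i,j)" .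
  qed (simp_all add: Phi_def exp_super_def)
  have dens: "density m (\<pi> t)" if t: "t \<ge> 0" for t
  proof -
    have wn: "w q t \<ge> 0" if "q < m" for q unfolding w_def by (rule Wf_nonneg[OF Cb[OF that] t])
    have car: "\<pi> t \<in> carrier_mat m m" unfolding \<pi>_def by (rule carrier_matI) simp_all
    have qf: "(\<Sum>i<m. \<Sum>j<m. cnj (v i) * \<pi> t $$ (i,j) * v j) = (\<Sum>i<m. of_real (w i t * (cmod (v i))^2))" for v
    proof (rule sum.cong[OF refl])
      fix i assume "i \<in> {..<m}"
      then have i: "i < m" by simp
      have "(\<Sum>j<m. cnj (v i) * \<pi> t $$ (i,j) * v j) = (\<Sum>j<m. if i = j then cnj (v i) * of_real (w i t) * v j else 0)"
        by (rule sum.cong[OF refl]) (simp add: \<pi>_def i)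
      also have "\<dots> = cnj (v i) * of_real (w i t) * v i" using i by simp
      also have "\<dots> = of_real (w i t) * (v i * cnj (v i))"
        by (simp add: mult_ac)
      also have "\<dots> = of_real (w i t * (cmod (v i))^2)"
        by (simp only: of_real_mult complex_norm_square)
      finally show "(\<Sum>j<m. cnj (v i) * \<pi> t $$ (i,j) * v j) = of_real (w i t * (cmod (v i))^2)" .
    qed
    have "psd m (\<pi> t)"
      unfolding psd_def using car wn by (simp add: qf) (blast intro: sum_nonneg mult_nonneg_nonneg zero_le_power2)
    moreover have "tr (\<pi> t) = 1"
    proof -
      have "tr (\<pi> t) = (\<Sum>i<m. of_real (w i t))" unfolding tr_def \<pi>_def by simp
      also have "\<dots> = of_real (\<Sum>i<m. w i t)" by simp
      also have "(\<Sum>i<m. w i t) = 1" unfolding w_def by (rule Wf_sum[OF Cb]) (use Cp in auto)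
      finally show ?thesis by simp
    qed
    ultimately show ?thesis unfolding density_def by simp
  qed
  have cont: "continuous_on {0..} (\<lambda>t. \<pi> t $$ (i,j))" if "i < m" "j < m" for i j
  proof (cases "i = j")
    case True
    have "isCont (\<lambda>t. complex_of_real (w i t)) t" for t
      unfolding w_def by (intro isCont_of_real Wf_cont Cb that(1))
    then have "continuous_on {0..} (\<lambda>t. complex_of_real (w i t))"
      by (intro continuous_at_imp_continuous_on) auto
    then show ?thesis using that True by (simp add: \<pi>_def)
  next
    case False
    then show ?thesis using that by (simp add: \<pi>_def)
  qed
  have cp: "cptp (d*m) d (Phi d m Qf)" by (rule Phi_cptp[OF Qc Qu'])
  show ?thesis
    unfolding quantum_programmable_def d_def[symmetric] L_def[symmetric]
  proof (intro exI[of _ m] exI[of _ "Phi d m Qf"] exI[of _ \<pi>] conjI allI impI ballI)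
    show "cptp (d*m) d (Phi d m Qf)" by (rule cp)
    show "density m (\<pi> t)" if "t \<ge> 0" for t using dens that by blast
    show "continuous_on {0..} (\<lambda>t. \<pi> t $$ (i,j))" if "i < m" "j < m" for i j using cont that by blast
    show "Phi d m Qf (kron \<rho> (\<pi> t)) = exp_super d L t \<rho>" if "\<rho> \<in> carrier_mat d d" for t \<rho> using main that by blast
  qed
qed

end
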